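(* Let $\mathfrak a=\mathbb H^p$ and $V=\mathrm{Span}(J_1,J_2)$ with $J_1=\mathrm{diag}(L_{a_1},\dots,L_{a_p})$, $J_2=\mathrm{diag}(L_{b_1},\dots,L_{b_p})$, where $a_s,b_s\in\mathrm{Im}\,\mathbb H$ are linearly independent for each $s$. Then for every inner product on $V$, $(V,\langle\cdot,\cdot\rangle)$ is a WS-pair. More precisely, there is $P=\mathrm{diag}(L_{q_1},\dots,L_{q_p})$ with unit $q_s\in \mathrm{Im}\,\mathbb H$ such that $PJP^{-1}=-J$ for all $J\in V$, and for every $X\in\mathfrak a$ there is $Q=\mathrm{diag}(R_{r_1},\dots,R_{r_p})$ with unit $r_s\in\mathbb H$ such that $N=QP$ satisfies $NX=-X$ and $NJ=-JN$ for all $J\in V$.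
   Context: $\mathbb H$ denotes the quaternions with standard inner product, $L_q,R_q$ left and right multiplication by $q$, and $\mathrm{diag}$ denotes block-diagonal operators on $\mathbb H^p$ acting coordinatewise. For a Euclidean space $\mathfrak a$, a subspace $V\subset\mathfrak{so}(\mathfrak a)$ with inner product $\langle\cdot,\cdot\rangle$ defines the metric 2-step nilpotent Lie algebra $\mathfrak n=V\oplus\mathfrak a$ (orthogonal sum, $V$ central, $\langle J,[X,Y]\rangle=\langle JX,Y\rangle$). It is a WS-pair if the corresponding simply connected nilpotent Lie group with left-invariant metric is weakly symmetric. Standing fact: this holds iff for every $J\in V$, $X\in\mathfrak a$ there is $N\in\mathcal N(V)=\{N\in O(\mathfrak a): NVN^{-1}\subset V$, $K\mapsto NKN^{-1}$ orthogonal on $(V,\langle\cdot,\cdot\rangle)\}$ with $NX=-X$, $NJ=-JN$. *)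

theory Defs
  imports "HOL-Analysis.Analysis"
begin

text \<open>Quaternions modelled as real^4 with components (real, i, j, k) = indices 1,2,3,4;
  the Euclidean inner product on real^4 is the standard quaternion inner product.\<close>

type_synonym quat = "real^4"

definition qmul :: "quat \<Rightarrow> quat \<Rightarrow> quat" where
  "qmul x y = vector
     [ x$1*y$1 - x$2*y$2 - x$3*y$3 - x$4*y$4,
       x$1*y$2 + x$2*y$1 + x$3*y$4 - x$4*y$3,
       x$1*y$3 - x$2*y$4 + x$3*y$1 + x$4*y$2,
       x$1*y$4 + x$2*y$3 - x$3*y$2 + x$4*y$1 ]"

definition pure_quat :: "quat \<Rightarrow> bool" where
  "pure_quat x \<longleftrightarrow> x$1 = 0"

definition diagL :: "quat^'p \<Rightarrow> quat^'p \<Rightarrow> quat^'p" where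
  "diagL a X = (\<chi> s. qmul (a$s) (X$s))"

definition diagR :: "quat^'p \<Rightarrow> quat^'p \<Rightarrow> quat^'p" where
  "diagR a X = (\<chi> s. qmul (X$s) (a$s))"

definition span2 :: "('v::real_vector \<Rightarrow> 'v) \<Rightarrow> ('v \<Rightarrow> 'v) \<Rightarrow> ('v \<Rightarrow> 'v) set" where
  "span2 J1 J2 = {(\<lambda>x. c1 *\<^sub>R J1 x + c2 *\<^sub>R J2 x) | c1 c2. True}"

definition inner_prod_on :: "('v::real_vector \<Rightarrow> 'v) set \<Rightarrow> (('v \<Rightarrow> 'v) \<Rightarrow> ('v \<Rightarrow> 'v) \<Rightarrow> real) \<Rightarrow> bool" where
  "inner_prod_on V ip \<longleftrightarrow>
     (\<forall>J\<in>V. \<forall>K\<in>V. ip J K = ip K J) \<and>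
     (\<forall>J\<in>V. \<forall>K\<in>V. \<forall>L\<in>V. \<forall>c. ip (\<lambda>x. c *\<^sub>R J x + K x) L = c * ip J L + ip K L) \<and>
     (\<forall>J\<in>V. J \<noteq> (\<lambda>x. 0) \<longrightarrow> ip J J > 0)"

definition normaliser :: "('v::real_inner \<Rightarrow> 'v) set \<Rightarrow> (('v \<Rightarrow> 'v) \<Rightarrow> ('v \<Rightarrow> 'v) \<Rightarrow> real) \<Rightarrow> ('v \<Rightarrow> 'v) set" where
  "normaliser V ip = {N. orthogonal_transformation N \<and>
       (\<forall>J\<in>V. N \<circ> J \<circ> inv N \<in> V) \<and>
       (\<forall>J\<in>V. \<forall>K\<in>V. ip (N \<circ> J \<circ> inv N) (N \<circ> K \<circ> inv N) = ip J K)}"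

text \<open>WS-pair, via the standing characterisation of weak symmetry.\<close>

definition WS_pair :: "('v::real_inner \<Rightarrow> 'v) set \<Rightarrow> (('v \<Rightarrow> 'v) \<Rightarrow> ('v \<Rightarrow> 'v) \<Rightarrow> real) \<Rightarrow> bool" where
  "WS_pair V ip \<longleftrightarrow>
     (\<forall>J\<in>V. \<forall>X. \<exists>N\<in>normaliser V ip. N X = - X \<and> (\<forall>x. N (J x) = - J (N x)))"

end

theory Submission
  imports Defs
begin


lemma vector_4 [simp]:
 "(vector [x,y,z,w] ::('a::zero)^4)$1 = x"
 "(vector [x,y,z,w] ::('a::zero)^4)$2 = y"
 "(vector [x,y,z,w] ::('a::zero)^4)$3 = z"
 "(vector [x,y,z,w] ::('a::zero)^4)$4 = w"
  unfolding vector_def by simp_all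

lemma qmul_c [simp]:
 "qmul x y $1 = x$1*y$1 - x$2*y$2 - x$3*y$3 - x$4*y$4"
 "qmul x y $2 = x$1*y$2 + x$2*y$1 + x$3*y$4 - x$4*y$3"
 "qmul x y $3 = x$1*y$3 - x$2*y$4 + x$3*y$1 + x$4*y$2"
 "qmul x y $4 = x$1*y$4 + x$2*y$3 - x$3*y$2 + x$4*y$1"
  by (simp_all add: qmul_def)

lemma q_eq: "(x::quat) = y \<longleftrightarrow> x$1 = y$1 \<and> x$2 = y$2 \<and> x$3 = y$3 \<and> x$4 = y$4"
  unfolding vec_eq_iff forall_4 by (rule refl)

lemma qnorm: "norm (x::quat) = sqrt (x$1^2 + x$2^2 + x$3^2 + x$4^2)"
  by (simp add: norm_vec_def L2_set_def sum_4)

lemma qmul_assoc: "qmul (qmul x y) z = qmul x (qmul y z)"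
  by (simp add: q_eq algebra_simps)

lemma qmul_norm: "norm (qmul x y) = norm x * norm y"
proof -
  have "(qmul x y$1)^2 + (qmul x y$2)^2 + (qmul x y$3)^2 + (qmul x y$4)^2
     = (x$1^2 + x$2^2 + x$3^2 + x$4^2) * (y$1^2 + y$2^2 + y$3^2 + y$4^2)"
    by (simp add: power2_eq_square algebra_simps)
  then show ?thesis by (simp add: qnorm real_sqrt_mult)
qed

lemma qmul_add_left: "qmul (x + y) z = qmul x z + qmul y z"
  by (simp add: q_eq algebra_simps)
lemma qmul_add_right: "qmul z (x + y) = qmul z x + qmul z y"
  by (simp add: q_eq algebra_simps)
lemma qmul_scale_left: "qmul (c *\<^sub>R x) z = c *\<^sub>R qmul x z"
  by (simp add: q_eq algebra_simps)
lemma qmul_scale_right: "qmul z (c *\<^sub>R x) = c *\<^sub>R qmul z x"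
  by (simp add: q_eq algebra_simps)
lemma qmul_neg_left: "qmul (- x) z = - qmul x z"
  by (simp add: q_eq algebra_simps)
lemma qmul_neg_right: "qmul z (- x) = - qmul z x"
  by (simp add: q_eq algebra_simps)

definition qone :: quat where "qone = vector [1,0,0,0]"
definition conjq :: "quat \<Rightarrow> quat" where "conjq x = vector [x$1, - x$2, - x$3, - x$4]"
definition cr :: "quat \<Rightarrow> quat \<Rightarrow> quat" where
  "cr a b = vector [0, a$3*b$4 - a$4*b$3, a$4*b$2 - a$2*b$4, a$2*b$3 - a$3*b$2]"
definition orth :: "quat \<Rightarrow> quat \<Rightarrow> bool" where
  "orth x y \<longleftrightarrow> x$2*y$2 + x$3*y$3 + x$4*y$4 = 0"

lemma qone_left: "qmul qone x = x" by (simp add: q_eq qone_def)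
lemma qone_right: "qmul x qone = x" by (simp add: q_eq qone_def)
lemma norm_qone: "norm qone = 1" by (simp add: qnorm qone_def)
lemma norm_conjq: "norm (conjq x) = norm x" by (simp add: qnorm conjq_def)
lemma mul_conjq: "qmul x (conjq x) = (norm x ^ 2) *\<^sub>R qone"
  by (simp add: q_eq qnorm conjq_def qone_def algebra_simps power2_eq_square)

lemma anti:
  assumes "q$1 = 0" "e$1 = 0" "orth q e"
  shows "qmul q (qmul e x) = - qmul e (qmul q x)"
proof -
  have "qmul q (qmul e x) + qmul e (qmul q x) = (-2*(q$2*e$2+q$3*e$3+q$4*e$4)) *\<^sub>R x"
    using assms(1,2) by (simp add: q_eq algebra_simps)
  then show ?thesis using assms(3) unfolding orth_def by (simp add: eq_neg_iff_add_eq_0)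
qed

lemma unit_sq:
  assumes "q$1 = 0" "norm q = 1"
  shows "qmul q (qmul q x) = - x"
proof -
  have n: "q$2^2 + q$3^2 + q$4^2 = 1" using assms by (simp add: qnorm)
  have "qmul q (qmul q x) = (-(q$2^2 + q$3^2 + q$4^2)) *\<^sub>R x"
    using assms(1) by (simp add: q_eq algebra_simps power2_eq_square)
  then show ?thesis using n by simp
qed

lemma cr_orth: "a$1 = 0 \<Longrightarrow> b$1 = 0 \<Longrightarrow> orth (cr a b) a \<and> orth (cr a b) b"
  by (simp add: orth_def cr_def algebra_simps)

lemma cr_nz:
  assumes "a$1 = 0" "b$1 = 0" "\<forall>c1 c2 :: real. c1 *\<^sub>R a + c2 *\<^sub>R b = 0 \<longrightarrow> c1 = 0 \<and> c2 = 0"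
  shows "cr a b \<noteq> 0"
proof
  assume z: "cr a b = 0"
  then have e: "a$3*b$4 = a$4*b$3" "a$4*b$2 = a$2*b$4" "a$2*b$3 = a$3*b$2"
    by (simp_all add: q_eq cr_def)
  show False
  proof (cases "a$2 = 0 \<and> a$3 = 0 \<and> a$4 = 0")
    case True
    then have "1 *\<^sub>R a + 0 *\<^sub>R b = 0" using assms(1) by (simp add: q_eq)
    from assms(3)[rule_format, OF this] show False by simp
  next
    case False
    then consider "a$2 \<noteq> 0" | "a$3 \<noteq> 0" | "a$4 \<noteq> 0" by blast
    then show False
    proof cases
      case 1
      have "(b$2) *\<^sub>R a + (- a$2) *\<^sub>R b = 0" using assms(1,2) e by (simp add: q_eq algebra_simps)
      from assms(3)[rule_format, OF this] show False using 1 by simp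
    next
      case 2
      have "(b$3) *\<^sub>R a + (- a$3) *\<^sub>R b = 0" using assms(1,2) e by (simp add: q_eq algebra_simps)
      from assms(3)[rule_format, OF this] show False using 2 by simp
    next
      case 3
      have "(b$4) *\<^sub>R a + (- a$4) *\<^sub>R b = 0" using assms(1,2) e by (simp add: q_eq algebra_simps)
      from assms(3)[rule_format, OF this] show False using 3 by simp
    qed
  qed
qed

lemma span_comp:
  assumes "J \<in> span2 (diagL a) (diagL b)"
  obtains c1 c2 where "\<And>x. J x = (\<chi> s. qmul (c1 *\<^sub>R a$s + c2 *\<^sub>R b$s) (x$s))"
    "\<And>K. K = (\<lambda>x. c1 *\<^sub>R diagL a x + c2 *\<^sub>R diagL b x) \<Longrightarrow> K = J"
proof -
  from assms obtain c1 c2 where J: "J = (\<lambda>x. c1 *\<^sub>R diagL a x + c2 *\<^sub>R diagL b x)"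
    unfolding span2_def by blast
  have "\<And>x. J x = (\<chi> s. qmul (c1 *\<^sub>R a$s + c2 *\<^sub>R b$s) (x$s))"
    unfolding J by (simp add: vec_eq_iff diagL_def qmul_add_left qmul_scale_left)
  then show ?thesis using that J by blast
qed

lemma neg_span: "J \<in> span2 A B \<Longrightarrow> (\<lambda>x. - J x) \<in> span2 A B"
  unfolding span2_def
  by clarify (rule_tac x="- c1" in exI, rule_tac x="- c2" in exI, auto simp: algebra_simps)

lemma zero_span: "(\<lambda>x. 0) \<in> span2 A B"
  unfolding span2_def by (rule CollectI, rule_tac x=0 in exI, rule_tac x=0 in exI, simp)

lemma ip_neg:
  assumes ip: "inner_prod_on V ip" and V: "V = span2 A B" and J: "J \<in> V" and K: "K \<in> V"
  shows "ip (\<lambda>x. - J x) (\<lambda>x. - K x) = ip J K"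
proof -
  have Z: "(\<lambda>x. 0) \<in> V" using V zero_span by simp
  have lin: "\<And>J K L c. J \<in> V \<Longrightarrow> K \<in> V \<Longrightarrow> L \<in> V \<Longrightarrow> ip (\<lambda>x. c *\<^sub>R J x + K x) L = c * ip J L + ip K L"
    and sym: "\<And>J K. J \<in> V \<Longrightarrow> K \<in> V \<Longrightarrow> ip J K = ip K J"
    using ip unfolding inner_prod_on_def by blast+
  have z: "ip (\<lambda>x. 0) L = 0" if "L \<in> V" for L
    using lin[OF Z Z that, of 1] by simp
  have n: "ip (\<lambda>x. - J x) L = - ip J L" if "J \<in> V" "L \<in> V" for J L
    using lin[OF that(1) Z that(2), of "-1"] z[OF that(2)] by simp
  have JN: "(\<lambda>x. - J x) \<in> V" "(\<lambda>x. - K x) \<in> V" using J K V neg_span by auto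
  have "ip (\<lambda>x. - J x) (\<lambda>x. - K x) = - ip J (\<lambda>x. - K x)" using n J JN by simp
  also have "\<dots> = - ip (\<lambda>x. - K x) J" using sym J JN by simp
  also have "\<dots> = ip K J" using n K J by simp
  also have "\<dots> = ip J K" using sym J K by simp
  finally show ?thesis .
qed

lemma comm:
  assumes q: "\<forall>s. q$s$1 = 0 \<and> orth (q$s) (a$s) \<and> orth (q$s) (b$s)"
    and ab: "\<forall>s. a$s$1 = 0 \<and> b$s$1 = 0"
    and J: "J \<in> span2 (diagL a) (diagL b)"
  shows "diagR r (diagL q (J x)) = - J (diagR r (diagL q x))"
proof -
  obtain c1 c2 where Jx: "\<And>x. J x = (\<chi> s. qmul (c1 *\<^sub>R a$s + c2 *\<^sub>R b$s) (x$s))"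
    using span_comp[OF J] by blast
  have "qmul (qmul (q$s) (qmul (c1 *\<^sub>R a$s + c2 *\<^sub>R b$s) (x$s))) (r$s)
     = - qmul (c1 *\<^sub>R a$s + c2 *\<^sub>R b$s) (qmul (qmul (q$s) (x$s)) (r$s))" for s
  proof -
    have o: "orth (q$s) (c1 *\<^sub>R a$s + c2 *\<^sub>R b$s)"
    proof -
      let ?u = "q$s$2*a$s$2 + q$s$3*a$s$3 + q$s$4*a$s$4"
      let ?v = "q$s$2*b$s$2 + q$s$3*b$s$3 + q$s$4*b$s$4"
      have u: "?u = 0" "?v = 0" using q unfolding orth_def by auto
      have "q$s$2*(c1*a$s$2+c2*b$s$2) + q$s$3*(c1*a$s$3+c2*b$s$3) + q$s$4*(c1*a$s$4+c2*b$s$4)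
          = c1 * ?u + c2 * ?v" by (simp add: algebra_simps)
      then show ?thesis using u unfolding orth_def by simp
    qed
    show ?thesis
      using anti[OF _ _ o, of "x$s"] q ab
      by (simp add: qmul_assoc qmul_neg_left)
  qed
  then show ?thesis unfolding Jx diagR_def diagL_def by (simp add: vec_eq_iff)
qed

lemma orthN:
  assumes "\<forall>s. norm (q$s) = 1" "\<forall>s. norm (r$s) = 1"
  shows "orthogonal_transformation (\<lambda>x. diagR r (diagL q x))"
  unfolding orthogonal_transformation linear_iff
proof (intro conjI allI)
  fix x y :: "quat^'a" and c :: real
  show "diagR r (diagL q (x + y)) = diagR r (diagL q x) + diagR r (diagL q y)"
    by (simp add: vec_eq_iff diagR_def diagL_def qmul_add_left qmul_add_right)
  show "diagR r (diagL q (c *\<^sub>R x)) = c *\<^sub>R diagR r (diagL q x)"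
    by (simp add: vec_eq_iff diagR_def diagL_def qmul_scale_left qmul_scale_right)
  show "norm (diagR r (diagL q x)) = norm x"
  proof -
    have "(\<lambda>i. norm (diagR r (diagL q x) $ i)) = (\<lambda>i. norm (x$i))"
      using assms by (simp add: diagR_def diagL_def qmul_norm)
    then show ?thesis by (metis norm_vec_def)
  qed
qed

lemma conj_inv:
  fixes F :: "'v::euclidean_space \<Rightarrow> 'v"
  assumes "orthogonal_transformation F" "\<forall>x. F (J x) = - J (F x)"
  shows "F \<circ> J \<circ> inv F = (\<lambda>x. - J x)"
proof
  fix x
  have "surj F" using assms(1) orthogonal_transformation_surj by blast
  then show "(F \<circ> J \<circ> inv F) x = - J x" using assms(2) by (simp add: surj_f_inv_f)
qed



lemma orth_scale: "orth x y \<Longrightarrow> orth (k *\<^sub>R x) y"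
proof -
  assume o: "orth x y"
  have "(k * x$2) * y$2 + (k * x$3) * y$3 + (k * x$4) * y$4 = k * (x$2*y$2 + x$3*y$3 + x$4*y$4)"
    by (simp add: algebra_simps)
  then show ?thesis using o unfolding orth_def by simp
qed

theorem mainTheorem3:
  fixes a b :: "quat^'p"
  assumes pure: "\<forall>s. pure_quat (a$s) \<and> pure_quat (b$s)"
    and indep: "\<forall>s. \<forall>c1 c2 :: real. c1 *\<^sub>R a$s + c2 *\<^sub>R b$s = 0 \<longrightarrow> c1 = 0 \<and> c2 = 0"
  shows "(\<forall>ip. inner_prod_on (span2 (diagL a) (diagL b)) ip
            \<longrightarrow> WS_pair (span2 (diagL a) (diagL b)) ip)
       \<and> (\<exists>q :: quat^'p. (\<forall>s. pure_quat (q$s) \<and> norm (q$s) = 1) \<and>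
            (\<forall>J\<in>span2 (diagL a) (diagL b). diagL q \<circ> J \<circ> inv (diagL q) = (\<lambda>x. - J x)) \<and>
            (\<forall>X :: quat^'p. \<exists>r :: quat^'p. (\<forall>s. norm (r$s) = 1) \<and>
               diagR r (diagL q X) = - X \<and>
               (\<forall>J\<in>span2 (diagL a) (diagL b). \<forall>x. diagR r (diagL q (J x)) = - J (diagR r (diagL q x)))))"
proof -
  let ?V = "span2 (diagL a) (diagL b)"
  have ab: "\<forall>s. a$s$1 = 0 \<and> b$s$1 = 0" using pure unfolding pure_quat_def by blast
  define q :: "quat^'p" where "q = (\<chi> s. (1 / norm (cr (a$s) (b$s))) *\<^sub>R cr (a$s) (b$s))"
  have nz: "cr (a$s) (b$s) \<noteq> 0" for s using cr_nz[of "a$s" "b$s"] ab indep by blast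
  have qn: "norm (q$s) = 1" for s using nz[of s] by (simp add: q_def)
  have q1: "q$s$1 = 0" for s by (simp add: q_def cr_def)
  have qo: "orth (q$s) (a$s) \<and> orth (q$s) (b$s)" for s
    using cr_orth[of "a$s" "b$s"] ab orth_scale unfolding q_def by simp
  have qall: "\<forall>s. q$s$1 = 0 \<and> orth (q$s) (a$s) \<and> orth (q$s) (b$s)" using q1 qo by blast
  define rr :: "quat^'p \<Rightarrow> quat^'p" where
    "rr X = (\<chi> s. if X$s = 0 then qone
        else (1 / norm (X$s) ^ 2) *\<^sub>R qmul (conjq (X$s)) (qmul (q$s) (X$s)))" for X
  have rn: "\<forall>s. norm (rr X $ s) = 1" for X
  proof
    fix s
    show "norm (rr X $ s) = 1"
    proof (cases "X$s = 0")
      case True then show ?thesis by (simp add: rr_def norm_qone)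
    next
      case False then show ?thesis
        by (simp add: rr_def qmul_norm norm_conjq qn power2_eq_square)
    qed
  qed
  have rX: "diagR (rr X) (diagL q X) = - X" for X
  proof -
    have "qmul (qmul (q$s) (X$s)) (rr X $ s) = - X$s" for s
    proof (cases "X$s = 0")
      case True then show ?thesis by (simp add: rr_def qone_right q_eq)
    next
      case False
      have "qmul (qmul (q$s) (X$s)) (rr X $ s)
          = (1 / norm (X$s) ^ 2) *\<^sub>R qmul (q$s) (qmul (qmul (X$s) (conjq (X$s))) (qmul (q$s) (X$s)))"
        using False by (simp add: rr_def qmul_scale_right qmul_assoc)
      also have "\<dots> = qmul (q$s) (qmul (q$s) (X$s))"
        using False by (simp add: mul_conjq qmul_scale_left qmul_scale_right qone_left)
      also have "\<dots> = - X$s" using unit_sq q1 qn by blast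
      finally show ?thesis .
    qed
    then show ?thesis by (simp add: vec_eq_iff diagR_def diagL_def)
  qed
  have cm: "\<forall>J\<in>?V. \<forall>x. diagR r (diagL q (J x)) = - J (diagR r (diagL q x))" for r
    using comm[OF qall ab] by blast
  have ot: "orthogonal_transformation (\<lambda>x. diagR (rr X) (diagL q x))" for X
    using orthN qn rn by blast
  define one :: "quat^'p" where "one = (\<chi> s. qone)"
  have d1: "diagR one (diagL q x) = diagL q x" for x
    by (simp add: one_def diagR_def qone_right vec_eq_iff)
  have otq: "orthogonal_transformation (diagL q)"
    using orthN[of q one] qn by (simp add: one_def norm_qone d1[unfolded one_def])
  have part2: "\<forall>J\<in>?V. diagL q \<circ> J \<circ> inv (diagL q) = (\<lambda>x. - J x)"
  proof
    fix J assume J: "J \<in> ?V"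
    have "\<forall>x. diagL q (J x) = - J (diagL q x)" using cm[of one] J d1 by simp
    then show "diagL q \<circ> J \<circ> inv (diagL q) = (\<lambda>x. - J x)" using conj_inv otq by blast
  qed
  have part1: "WS_pair ?V ip" if ip: "inner_prod_on ?V ip" for ip
    unfolding WS_pair_def
  proof (intro ballI allI)
    fix J X assume J: "J \<in> ?V"
    let ?N = "\<lambda>x. diagR (rr X) (diagL q x)"
    have cj: "?N \<circ> K \<circ> inv ?N = (\<lambda>x. - K x)" if "K \<in> ?V" for K
      using conj_inv[OF ot] cm that by blast
    have nm: "?N \<in> normaliser ?V ip"
      unfolding normaliser_def
    proof (intro CollectI conjI ballI)
      show "orthogonal_transformation ?N" by (rule ot)
      fix K assume K: "K \<in> ?V"
      show "?N \<circ> K \<circ> inv ?N \<in> ?V" unfolding cj[OF K] by (rule neg_span[OF K])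
      fix L assume L: "L \<in> ?V"
      show "ip (?N \<circ> K \<circ> inv ?N) (?N \<circ> L \<circ> inv ?N) = ip K L"
        unfolding cj[OF K] cj[OF L] by (rule ip_neg[OF ip refl K L])
    qed
    show "\<exists>N\<in>normaliser ?V ip. N X = - X \<and> (\<forall>x. N (J x) = - J (N x))"
    proof (rule bexI[OF _ nm], intro conjI allI)
      show "?N X = - X" by (rule rX)
      fix x show "?N (J x) = - J (?N x)" using cm J by blast
    qed
  qed
  have "\<forall>s. pure_quat (q$s) \<and> norm (q$s) = 1" using qn q1 unfolding pure_quat_def by blast
  moreover have "\<forall>X :: quat^'p. \<exists>r :: quat^'p. (\<forall>s. norm (r$s) = 1) \<and>
               diagR r (diagL q X) = - X \<and>
               (\<forall>J\<in>?V. \<forall>x. diagR r (diagL q (J x)) = - J (diagR r (diagL q x)))"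
  proof
    fix X :: "quat^'p"
    show "\<exists>r :: quat^'p. (\<forall>s. norm (r$s) = 1) \<and>
               diagR r (diagL q X) = - X \<and>
               (\<forall>J\<in>?V. \<forall>x. diagR r (diagL q (J x)) = - J (diagR r (diagL q x)))"
      by (rule exI[of _ "rr X"]) (intro conjI rn rX cm)
  qed
  ultimately show ?thesis using part1 part2 by blast
qed

end
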